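(* Let $I,J\subset\mathbb{R}$ be intervals, $f:I\times J\to I$, $f_\lambda(x)=f(x,\lambda)$, $\lambda_0\in J$, $f_0=f_{\lambda_0}$. Assume: (H1) $f$ is a $C^1$ family of $C^2$ interval maps; (H2) $f_0$ is not constant on any interval; (H3) $f_0$ has at most one of: (a) a non-hyperbolic fixed point or periodic orbit, which as $\lambda$ varies is a generic codimension-one period-doubling or saddle-node bifurcation; (b) one critical point which constitutes a tangency between stable and unstable manifolds of fixed points or periodic orbits, generic in that as $\lambda$ varies through $\lambda_0$ the critical point moves from one side of the periodic point to the other; (H4) for each $\lambda$, $x_\lambda$ is a repelling fixed point of $f_\lambda$, $x_0:=x_{\lambda_0}$, and $y$ is a homoclinic point to $x_0$ for $f_0$; (H5) the homoclinic orbit containing $y$ at $\lambda_0$ contains only one critical point of $f_0$; (H6) $w$ is a homoclinic tangency point to $x_0$ for $f_0$ contained in at least one homoclinic orbit $(z_{-k})_{k\ge0}$, with $w=z_{-L}$. If $w\in U_{right}\cap U_{left}$, then $(w,\lambda_0)$ is not a chain explosion point.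
   Context: An $\epsilon$-chain for $g$ from $x$ to $y$: $z_0=x,\dots,z_N=y$ with $|g(z_{n-1})-z_n|<\epsilon$; $x$ is chain recurrent if for every $\epsilon>0$ there is such a chain from $x$ to itself with $N>0$. $(x,\lambda_0)$ is a chain explosion point if $x$ is chain recurrent for $f_{\lambda_0}$ but some neighborhood of $x$ contains no chain recurrent point of $f_\lambda$ for all $\lambda$ on one side of $\lambda_0$. For a repelling fixed point $x_0$, $y$ is homoclinic to $x_0$ if $y$ lies in the unstable manifold of $x_0$ and $f_0^K(y)=x_0$ for some $K>0$. A homoclinic orbit is a sequence $(z_{-k})_{k\ge0}$ with $z_0=x_0$, $z_{-K}=y$ for some $K$, $f_0(z_{-k})=z_{-k+1}$, $z_{-k}\to x_0$; $w=z_{-L}$ is a homoclinic tangency point if the graph of $f_0$ has a horizontal tangent at $w$. The sets $U_{left},U_{right}$ are defined when $f_0'(x_0)>0$: the local left and right branches of the unstable manifold of $x_0$ (small one-sided neighborhoods of $x_0$) are disjoint, and $U_{left}$, $U_{right}$ are the unions of all forward images under $f_0$ of the local left and right branches, respectively. *)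

theory Defs
  imports "HOL-Analysis.Analysis"
begin

definition dw :: "real set \<Rightarrow> (real \<Rightarrow> real) \<Rightarrow> real \<Rightarrow> real" where
  "dw S g x = (SOME d. (g has_real_derivative d) (at x within S))"

definition C2_map :: "real set \<Rightarrow> (real \<Rightarrow> real) \<Rightarrow> bool" where
  "C2_map I g \<longleftrightarrow> (\<exists>g1 g2. continuous_on I g2 \<and>
      (\<forall>x\<in>I. (g has_real_derivative g1 x) (at x within I) \<and>
               (g1 has_real_derivative g2 x) (at x within I)))"

definition C1_family_of_C2_maps :: "real set \<Rightarrow> real set \<Rightarrow> (real \<Rightarrow> real \<Rightarrow> real) \<Rightarrow> bool" where
  "C1_family_of_C2_maps I J f \<longleftrightarrow>
     (\<exists>Dx Dl. continuous_on (I \<times> J) (\<lambda>p. Dx (fst p) (snd p)) \<and>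
              continuous_on (I \<times> J) (\<lambda>p. Dl (fst p) (snd p)) \<and>
              (\<forall>x\<in>I. \<forall>l\<in>J. ((\<lambda>p. f (fst p) (snd p)) has_derivative
                    (\<lambda>h. Dx x l * fst h + Dl x l * snd h)) (at (x, l) within I \<times> J)))
   \<and> (\<forall>l\<in>J. C2_map I (\<lambda>x. f x l))"

definition periodic_pt :: "(real \<Rightarrow> real) \<Rightarrow> nat \<Rightarrow> real \<Rightarrow> bool" where
  "periodic_pt g n p \<longleftrightarrow> 0 < n \<and> (g ^^ n) p = p \<and> (\<forall>m. 0 < m \<and> m < n \<longrightarrow> (g ^^ m) p \<noteq> p)"

definition porbit :: "(real \<Rightarrow> real) \<Rightarrow> nat \<Rightarrow> real \<Rightarrow> real set" where
  "porbit g n p = {(g ^^ j) p | j. j < n}"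

definition unstable_set :: "real set \<Rightarrow> (real \<Rightarrow> real) \<Rightarrow> real set \<Rightarrow> real \<Rightarrow> bool" where
  "unstable_set I g S y \<longleftrightarrow> (\<exists>b. b 0 = y \<and> (\<forall>k. b k \<in> I \<and> g (b (Suc k)) = b k) \<and>
                                  (\<lambda>k. infdist (b k) S) \<longlonglongrightarrow> 0)"

definition repelling_fixed_point :: "real set \<Rightarrow> (real \<Rightarrow> real) \<Rightarrow> real \<Rightarrow> bool" where
  "repelling_fixed_point I g x \<longleftrightarrow> x \<in> I \<and> g x = x \<and> \<bar>dw I g x\<bar> > 1"

definition homoclinic_point :: "real set \<Rightarrow> (real \<Rightarrow> real) \<Rightarrow> real \<Rightarrow> real \<Rightarrow> bool" where
  "homoclinic_point I g x0 y \<longleftrightarrow> y \<in> I \<and> unstable_set I g {x0} y \<and> (\<exists>K>0. (g ^^ K) y = x0)"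

(* z k plays the role of z_{-k} *)
definition homoclinic_orbit :: "real set \<Rightarrow> (real \<Rightarrow> real) \<Rightarrow> real \<Rightarrow> (nat \<Rightarrow> real) \<Rightarrow> bool" where
  "homoclinic_orbit I g x0 z \<longleftrightarrow> z 0 = x0 \<and> (\<exists>K. homoclinic_point I g x0 (z K)) \<and>
       (\<forall>k. z k \<in> I \<and> g (z (Suc k)) = z k) \<and> z \<longlonglongrightarrow> x0"

(* unions of forward images of the local left / right branches of the unstable manifold of x0
   (independent of the size of the small one-sided neighbourhood) *)
definition U_left :: "real set \<Rightarrow> (real \<Rightarrow> real) \<Rightarrow> real \<Rightarrow> real set" where
  "U_left I g x0 = {y. \<forall>\<delta>>0. \<exists>n u. u \<in> I \<and> x0 - \<delta> < u \<and> u < x0 \<and> (g ^^ n) u = y}"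

definition U_right :: "real set \<Rightarrow> (real \<Rightarrow> real) \<Rightarrow> real \<Rightarrow> real set" where
  "U_right I g x0 = {y. \<forall>\<delta>>0. \<exists>n u. u \<in> I \<and> x0 < u \<and> u < x0 + \<delta> \<and> (g ^^ n) u = y}"

definition chain_recurrent :: "real set \<Rightarrow> (real \<Rightarrow> real) \<Rightarrow> real \<Rightarrow> bool" where
  "chain_recurrent I g x \<longleftrightarrow> x \<in> I \<and>
     (\<forall>\<epsilon>>0. \<exists>(N::nat) (z::nat \<Rightarrow> real). 0 < N \<and> z 0 = x \<and> z N = x \<and> (\<forall>n\<le>N. z n \<in> I) \<and>
                 (\<forall>n. 0 < n \<and> n \<le> N \<longrightarrow> \<bar>g (z (n - 1)) - z n\<bar> < \<epsilon>))"

definition chain_explosion_point ::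
  "real set \<Rightarrow> real set \<Rightarrow> (real \<Rightarrow> real \<Rightarrow> real) \<Rightarrow> real \<Rightarrow> real \<Rightarrow> bool" where
  "chain_explosion_point I J f x l0 \<longleftrightarrow> chain_recurrent I (\<lambda>u. f u l0) x \<and>
     (\<exists>r>0. \<exists>\<delta>>0.
        (\<forall>l\<in>J. l0 - \<delta> < l \<and> l < l0 \<longrightarrow> \<not> (\<exists>u\<in>ball x r. chain_recurrent I (\<lambda>v. f v l) u)) \<or>
        (\<forall>l\<in>J. l0 < l \<and> l < l0 + \<delta> \<longrightarrow> \<not> (\<exists>u\<in>ball x r. chain_recurrent I (\<lambda>v. f v l) u)))"

definition nonhyperbolic_periodic :: "real set \<Rightarrow> (real \<Rightarrow> real) \<Rightarrow> nat \<Rightarrow> real \<Rightarrow> bool" where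
  "nonhyperbolic_periodic I g n p \<longleftrightarrow> p \<in> I \<and> periodic_pt g n p \<and> \<bar>dw I (g ^^ n) p\<bar> = 1"

definition generic_saddle_node ::
  "real set \<Rightarrow> real set \<Rightarrow> (real \<Rightarrow> real \<Rightarrow> real) \<Rightarrow> real \<Rightarrow> nat \<Rightarrow> real \<Rightarrow> bool" where
  "generic_saddle_node I J f l0 n p \<longleftrightarrow>
     dw I ((\<lambda>x. f x l0) ^^ n) p = 1 \<and>
     dw I (dw I ((\<lambda>x. f x l0) ^^ n)) p \<noteq> 0 \<and>
     dw J (\<lambda>l. ((\<lambda>x. f x l) ^^ n) p) l0 \<noteq> 0"

definition generic_period_doubling ::
  "real set \<Rightarrow> real set \<Rightarrow> (real \<Rightarrow> real \<Rightarrow> real) \<Rightarrow> real \<Rightarrow> nat \<Rightarrow> real \<Rightarrow> bool" where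
  "generic_period_doubling I J f l0 n p \<longleftrightarrow>
     dw I ((\<lambda>x. f x l0) ^^ n) p = -1 \<and>
     (\<exists>pc \<delta> d. \<delta> > 0 \<and> pc l0 = p \<and> d \<noteq> 0 \<and>
        continuous_on (J \<inter> ball l0 \<delta>) pc \<and>
        (\<forall>l\<in>J \<inter> ball l0 \<delta>. pc l \<in> I \<and> ((\<lambda>x. f x l) ^^ n) (pc l) = pc l) \<and>
        ((\<lambda>l. dw I ((\<lambda>x. f x l) ^^ n) (pc l)) has_real_derivative d) (at l0 within J)) \<and>
     (\<exists>s\<in>{-1, 1::real}.
        (\<forall>e>0. \<exists>\<delta>>0. \<forall>l\<in>J. 0 < s * (l - l0) \<and> s * (l - l0) < \<delta> \<longrightarrow>
            (\<exists>q\<in>I. periodic_pt (\<lambda>x. f x l) (2 * n) q \<and> \<bar>q - p\<bar> < e)) \<and>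
        (\<exists>e>0. \<exists>\<delta>>0. \<forall>l\<in>J. 0 < - s * (l - l0) \<and> - s * (l - l0) < \<delta> \<longrightarrow>
            \<not> (\<exists>q\<in>I. periodic_pt (\<lambda>x. f x l) (2 * n) q \<and> \<bar>q - p\<bar> < e)))"

(* c is a critical point of g lying in the unstable manifold of some periodic orbit and
   mapped by g^K onto the period-n point p (a tangency of stable and unstable manifolds) *)
definition tangency_crit :: "real set \<Rightarrow> (real \<Rightarrow> real) \<Rightarrow> real \<Rightarrow> real \<Rightarrow> nat \<Rightarrow> nat \<Rightarrow> bool" where
  "tangency_crit I g c p n K \<longleftrightarrow> c \<in> I \<and> dw I g c = 0 \<and> periodic_pt g n p \<and> (g ^^ K) c = p \<and>
     (\<exists>q m. periodic_pt g m q \<and> unstable_set I g (porbit g m q) c)"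

definition generic_tangency ::
  "real set \<Rightarrow> real set \<Rightarrow> (real \<Rightarrow> real \<Rightarrow> real) \<Rightarrow> real \<Rightarrow> real \<Rightarrow> real \<Rightarrow> nat \<Rightarrow> nat \<Rightarrow> bool" where
  "generic_tangency I J f l0 c p n K \<longleftrightarrow>
     (\<exists>cc pc \<delta> s. \<delta> > 0 \<and> s \<in> {-1, 1} \<and> cc l0 = c \<and> pc l0 = p \<and>
        continuous_on (J \<inter> ball l0 \<delta>) cc \<and> continuous_on (J \<inter> ball l0 \<delta>) pc \<and>
        (\<forall>l\<in>J \<inter> ball l0 \<delta>. cc l \<in> I \<and> pc l \<in> I \<and> dw I (\<lambda>x. f x l) (cc l) = 0 \<and>
                               ((\<lambda>x. f x l) ^^ n) (pc l) = pc l) \<and>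
        (\<forall>l\<in>J. l0 - \<delta> < l \<and> l < l0 \<longrightarrow> sgn (((\<lambda>x. f x l) ^^ K) (cc l) - pc l) = s) \<and>
        (\<forall>l\<in>J. l0 < l \<and> l < l0 + \<delta> \<longrightarrow> sgn (((\<lambda>x. f x l) ^^ K) (cc l) - pc l) = - s))"

definition H3 :: "real set \<Rightarrow> real set \<Rightarrow> (real \<Rightarrow> real \<Rightarrow> real) \<Rightarrow> real \<Rightarrow> bool" where
  "H3 I J f l0 \<longleftrightarrow>
    (let g = (\<lambda>x. f x l0);
         NH = {p. \<exists>n. nonhyperbolic_periodic I g n p};
         TC = {c. \<exists>p n K. tangency_crit I g c p n K}
     in (NH = {} \<and> TC = {}) \<or>
        (TC = {} \<and> (\<exists>n p. nonhyperbolic_periodic I g n p \<and> NH = porbit g n p \<and>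
                     (generic_saddle_node I J f l0 n p \<or> generic_period_doubling I J f l0 n p))) \<or>
        (NH = {} \<and> (\<exists>c. TC = {c} \<and>
                     (\<exists>p n K. tangency_crit I g c p n K \<and> generic_tangency I J f l0 c p n K))))"

end

theory Submission
  imports Defs
begin


lemma iter_in: "\<forall>x\<in>I. h x \<in> I \<Longrightarrow> x \<in> I \<Longrightarrow> (h ^^ k) x \<in> I"
  by (induct k) auto

lemma iter_fix: "h x = x \<Longrightarrow> (h ^^ k) x = x"
  by (induct k) auto

lemma cont_joint:
  assumes "C1_family_of_C2_maps I J f"
  shows "continuous_on (I \<times> J) (\<lambda>p. f (fst p) (snd p))"
proof -
  obtain Dx Dl where D: "\<forall>x\<in>I. \<forall>l\<in>J. ((\<lambda>p. f (fst p) (snd p)) has_derivative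
                    (\<lambda>h. Dx x l * fst h + Dl x l * snd h)) (at (x, l) within I \<times> J)"
    using assms unfolding C1_family_of_C2_maps_def by blast
  show ?thesis unfolding continuous_on_eq_continuous_within
  proof
    fix p assume "p \<in> I \<times> J"
    then obtain x l where p: "p = (x,l)" "x \<in> I" "l \<in> J" by auto
    show "continuous (at p within I \<times> J) (\<lambda>p. f (fst p) (snd p))"
      using has_derivative_continuous D p by blast
  qed
qed

lemma iter_cont_param:
  assumes c: "continuous_on (I \<times> J) (\<lambda>p. f (fst p) (snd p))"
    and m: "\<forall>x\<in>I. \<forall>l\<in>J. f x l \<in> I" and p: "p \<in> I"
  shows "continuous_on J (\<lambda>l. ((\<lambda>x. f x l) ^^ k) p)"
proof (induct k)
  case 0 then show ?case by simp
next
  case (Suc k)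
  have img: "(\<lambda>l. (((\<lambda>x. f x l) ^^ k) p, l)) ` J \<subseteq> I \<times> J"
    using iter_in[of I] m p by auto
  have "continuous_on J (\<lambda>l. (((\<lambda>x. f x l) ^^ k) p, l))"
    by (intro continuous_on_Pair Suc continuous_on_id)
  from continuous_on_compose2[OF c this img] show ?case by simp
qed

lemma iter_cont_space:
  assumes c: "continuous_on I h" and m: "\<forall>x\<in>I. h x \<in> I"
  shows "continuous_on I (h ^^ k)"
proof (induct k)
  case 0 then show ?case by (simp add: continuous_on_id)
next
  case (Suc k)
  have img: "(h ^^ k) ` I \<subseteq> I" using iter_in[OF m] by auto
  from continuous_on_compose2[OF c Suc img] show ?case by (simp add: o_def)
qed

lemma nonconst:
  fixes g :: "real \<Rightarrow> real"
  assumes c: "continuous_on I g" and m: "\<forall>x\<in>I. g x \<in> I"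
    and H2: "\<forall>a b. a < b \<and> {a..b} \<subseteq> I \<longrightarrow> \<not> (\<forall>x\<in>{a..b}. g x = g a)"
    and ab: "a < b" "{a..b} \<subseteq> I"
  shows "\<exists>s\<in>{a..b}. \<exists>t\<in>{a..b}. (g ^^ k) s \<noteq> (g ^^ k) t"
proof (induct k)
  case 0
  have "a \<in> {a..b}" "b \<in> {a..b}" "(g ^^ 0) a \<noteq> (g ^^ 0) b" using ab by auto
  then show ?case by blast
next
  case (Suc k)
  then obtain s t where st: "s \<in> {a..b}" "t \<in> {a..b}" "(g ^^ k) s \<noteq> (g ^^ k) t" by blast
  define T where "T = (g ^^ k) ` {a..b}"
  have "connected T" unfolding T_def
    by (rule connected_continuous_image[OF continuous_on_subset[OF iter_cont_space[OF c m] ab(2)]]) simp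
  define c0 where "c0 = min ((g ^^ k) s) ((g ^^ k) t)"
  define d0 where "d0 = max ((g ^^ k) s) ((g ^^ k) t)"
  have cd: "c0 < d0" "c0 \<in> T" "d0 \<in> T" using st unfolding c0_def d0_def T_def
    by (auto simp: min_def max_def)
  have sub: "{c0..d0} \<subseteq> T" using connected_contains_Icc[OF \<open>connected T\<close> cd(2,3)] .
  have TI: "T \<subseteq> I" unfolding T_def using iter_in[OF m] ab(2) by auto
  obtain x where x: "x \<in> {c0..d0}" "g x \<noteq> g c0" using H2 cd(1) sub TI by blast
  obtain s' where s': "s' \<in> {a..b}" "x = (g ^^ k) s'" using x sub unfolding T_def by blast
  obtain t' where t': "t' \<in> {a..b}" "c0 = (g ^^ k) t'" using cd unfolding T_def by blast
  have "(g ^^ Suc k) s' \<noteq> (g ^^ Suc k) t'" using s' t' x by simp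
  then show ?case using s' t' by blast
qed

lemma periodic_cr:
  assumes "\<forall>x\<in>I. h x \<in> I" "u \<in> I" "(h ^^ m) u = u" "0 < m"
  shows "chain_recurrent I h u"
  unfolding chain_recurrent_def
proof (intro conjI allI impI)
  show "u \<in> I" by fact
  fix e :: real assume "e > 0"
  show "\<exists>(N::nat) (z::nat \<Rightarrow> real). 0 < N \<and> z 0 = u \<and> z N = u \<and> (\<forall>n\<le>N. z n \<in> I) \<and>
                 (\<forall>n. 0 < n \<and> n \<le> N \<longrightarrow> \<bar>h (z (n - 1)) - z n\<bar> < e)"
  proof (intro exI[of _ m] exI[of _ "\<lambda>n. (h ^^ n) u"] conjI allI impI)
    fix n assume "0 < n \<and> n \<le> m"
    then obtain k where "n = Suc k" by (cases n) auto
    then show "\<bar>h ((h ^^ (n - 1)) u) - (h ^^ n) u\<bar> < e" using \<open>e > 0\<close> by simp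
  qed (use assms iter_in[of I h] in auto)
qed


lemma core:
  fixes g :: "real \<Rightarrow> real"
  assumes intI: "is_interval I" and gI: "\<forall>x\<in>I. g x \<in> I" and gc: "continuous_on I g"
    and H2: "\<forall>a b. a < b \<and> {a..b} \<subseteq> I \<longrightarrow> \<not> (\<forall>x\<in>{a..b}. g x = g a)"
    and x0I: "x0 \<in> I" and wI: "w \<in> I" and wx: "w \<noteq> x0" and gL: "(g ^^ L) w = x0"
    and gx0: "g x0 = x0"
    and wU: "w \<in> U_right I g x0 \<inter> U_left I g x0" and r: "r > 0"
  shows "\<exists>q m. q \<in> I \<and> 0 < m \<and> dist q w < r \<and> (g ^^ m) q = w \<and> (g ^^ m) w = x0 \<and>
               (q - w) * (x0 - w) > 0"
proof -
  have L0: "L > 0" using gL wx by (cases L) auto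
  define r' where "r' = min (r/2) (\<bar>w - x0\<bar>/2)"
  have r'p: "r' > 0" "r' < r" "r' < \<bar>w - x0\<bar>" using r wx unfolding r'_def by (auto simp: min_def)
  define a where "a = (if x0 < w then w - r' else w)"
  define b where "b = (if x0 < w then w else w + r')"
  have ab: "a < b" using r'p unfolding a_def b_def by auto
  have abI: "{a..b} \<subseteq> I"
  proof
    fix x assume x: "x \<in> {a..b}"
    show "x \<in> I"
    proof (cases "x0 < w")
      case True
      then have "x0 \<le> x" "x \<le> w" using x r'p unfolding a_def b_def by auto
      then show ?thesis using intI x0I wI unfolding is_interval_1 by blast
    next
      case False
      then have "w \<le> x" "x \<le> x0" using x r'p wx unfolding a_def b_def by auto
      then show ?thesis using intI x0I wI unfolding is_interval_1 by blast
    qed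
  qed
  have wab: "w \<in> {a..b}" using ab unfolding a_def b_def by (auto split: if_splits)
  have side: "dist q w < r \<and> (q - w) * (x0 - w) > 0" if "q \<in> {a..b}" "q \<noteq> w" for q
  proof (cases "x0 < w")
    case True
    then have "w - r' \<le> q" "q < w" using that unfolding a_def b_def by auto
    then show ?thesis using True r'p by (auto simp: dist_real_def intro!: mult_neg_neg)
  next
    case False
    then have "w < q" "q \<le> w + r'" "x0 > w" using that wx unfolding a_def b_def by auto
    then show ?thesis using r'p by (auto simp: dist_real_def)
  qed
  define T where "T = (g ^^ L) ` {a..b}"
  have "connected T" unfolding T_def
    by (rule connected_continuous_image[OF continuous_on_subset[OF iter_cont_space[OF gc gI] abI]]) simp
  have x0T: "x0 \<in> T" using wab gL unfolding T_def by force
  obtain s t where st: "s \<in> {a..b}" "t \<in> {a..b}" "(g ^^ L) s \<noteq> (g ^^ L) t"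
    using nonconst[OF gc gI H2 ab abI] by blast
  obtain v where v: "v \<in> T" "v \<noteq> x0" using st unfolding T_def by (metis imageI)
  have gnx0: "(g ^^ n) x0 = x0" for n using iter_fix gx0 by metis
  obtain u n where un: "u \<in> T" "(g ^^ n) u = w" "u \<noteq> x0"
  proof (cases "x0 < v")
    case True
    have "\<forall>\<delta>>0. \<exists>n u. u \<in> I \<and> x0 < u \<and> u < x0 + \<delta> \<and> (g ^^ n) u = w"
      using wU unfolding U_right_def by auto
    then obtain n u where "u \<in> I" "x0 < u" "u < x0 + (v - x0)" "(g ^^ n) u = w"
      using True by (meson diff_gt_0_iff_gt)
    moreover have "{x0..v} \<subseteq> T" using connected_contains_Icc[OF \<open>connected T\<close> x0T v(1)] .
    ultimately have "u \<in> T" "(g ^^ n) u = w" "u \<noteq> x0" by auto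
    then show ?thesis using that by blast
  next
    case False
    then have "v < x0" using v by auto
    have "\<forall>\<delta>>0. \<exists>n u. u \<in> I \<and> x0 - \<delta> < u \<and> u < x0 \<and> (g ^^ n) u = w"
      using wU unfolding U_left_def by auto
    then obtain n u where "u \<in> I" "x0 - (x0 - v) < u" "u < x0" "(g ^^ n) u = w"
      using \<open>v < x0\<close> by (meson diff_gt_0_iff_gt)
    moreover have "{v..x0} \<subseteq> T" using connected_contains_Icc[OF \<open>connected T\<close> v(1) x0T] .
    ultimately have "u \<in> T" "(g ^^ n) u = w" "u \<noteq> x0" by auto
    then show ?thesis using that by blast
  qed
  obtain q where q: "q \<in> {a..b}" "(g ^^ L) q = u" using un unfolding T_def by blast
  have qw: "q \<noteq> w" using q un gL by auto
  have "(g ^^ (n + L)) q = w" using q un by (simp add: funpow_add)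
  moreover have "(g ^^ (n + L)) w = x0" using gL gnx0 by (simp add: funpow_add)
  ultimately show ?thesis using side[OF q(1) qw] q abI L0
    by (intro exI[of _ q] exI[of _ "n + L"]) auto
qed

theorem mainTheorem5:
  fixes I J :: "real set" and f :: "real \<Rightarrow> real \<Rightarrow> real"
    and l0 y w :: real and xl :: "real \<Rightarrow> real"
  assumes intI: "is_interval I" and ndI: "interior I \<noteq> {}"
    and intJ: "is_interval J" and l0J: "l0 \<in> interior J"
    and maps: "\<forall>x\<in>I. \<forall>l\<in>J. f x l \<in> I"
    and H1: "C1_family_of_C2_maps I J f"
    and H2: "\<forall>a b. a < b \<and> {a..b} \<subseteq> I \<longrightarrow> \<not> (\<forall>x\<in>{a..b}. f x l0 = f a l0)"
    and H3: "H3 I J f l0"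
    and H4a: "\<forall>l\<in>J. repelling_fixed_point I (\<lambda>x. f x l) (xl l)"
    and H4b: "homoclinic_point I (\<lambda>x. f x l0) (xl l0) y"
    and H5: "\<forall>z. homoclinic_orbit I (\<lambda>x. f x l0) (xl l0) z \<and> (\<exists>K. z K = y) \<longrightarrow>
               card {c \<in> range z. dw I (\<lambda>x. f x l0) c = 0} = 1"
    and H6: "\<exists>z L. homoclinic_orbit I (\<lambda>x. f x l0) (xl l0) z \<and> z L = w \<and> dw I (\<lambda>x. f x l0) w = 0"
    and Udef: "dw I (\<lambda>x. f x l0) (xl l0) > 0"
    and wU: "w \<in> U_right I (\<lambda>x. f x l0) (xl l0) \<inter> U_left I (\<lambda>x. f x l0) (xl l0)"
  shows "\<not> chain_explosion_point I J f w l0"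
proof
  assume CEP: "chain_explosion_point I J f w l0"
  define g where "g = (\<lambda>x. f x l0)"
  have cj: "continuous_on (I \<times> J) (\<lambda>p. f (fst p) (snd p))" using cont_joint[OF H1] .
  have l0J': "l0 \<in> J" using l0J interior_subset by blast
  have gI: "\<forall>x\<in>I. g x \<in> I" using maps l0J' unfolding g_def by auto
  have gc: "continuous_on I g"
  proof -
    have "continuous_on I (\<lambda>x. (x, l0))" by (intro continuous_on_Pair continuous_on_id continuous_on_const)
    moreover have "(\<lambda>x. (x, l0)) ` I \<subseteq> I \<times> J" using l0J' by auto
    ultimately have "continuous_on I (\<lambda>x. f (fst (x, l0)) (snd (x, l0)))" by (rule continuous_on_compose2[OF cj])
    then show ?thesis unfolding g_def by simp
  qed
  define x0 where "x0 = xl l0"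
  have x0: "x0 \<in> I" "g x0 = x0" "dw I g x0 > 0"
    using H4a l0J' Udef unfolding repelling_fixed_point_def x0_def g_def by auto
  obtain z L where zL: "homoclinic_orbit I g x0 z" "z L = w" "dw I g w = 0"
    using H6 unfolding g_def x0_def by blast
  have zI: "\<forall>k. z k \<in> I \<and> g (z (Suc k)) = z k" "z 0 = x0"
    using zL(1) unfolding homoclinic_orbit_def by auto
  have zit: "(g ^^ k) (z k) = x0" for k
  proof (induct k)
    case 0 then show ?case using zI by simp
  next
    case (Suc k)
    have "(g ^^ Suc k) (z (Suc k)) = (g ^^ k) (g (z (Suc k)))" by (simp only: funpow_Suc_right o_apply)
    then show ?case using zI Suc by simp
  qed
  have wI: "w \<in> I" using zI zL by blast
  have gL: "(g ^^ L) w = x0" using zit zL by blast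
  have wx: "w \<noteq> x0" using x0 zL by auto
  have H2': "\<forall>a b. a < b \<and> {a..b} \<subseteq> I \<longrightarrow> \<not> (\<forall>x\<in>{a..b}. g x = g a)"
    using H2 unfolding g_def .
  have wU': "w \<in> U_right I g x0 \<inter> U_left I g x0" using wU unfolding g_def x0_def .
  obtain r \<delta> where r\<delta>: "r > 0" "\<delta> > 0"
    "(\<forall>l\<in>J. l0 - \<delta> < l \<and> l < l0 \<longrightarrow> \<not> (\<exists>u\<in>ball w r. chain_recurrent I (\<lambda>v. f v l) u)) \<or>
     (\<forall>l\<in>J. l0 < l \<and> l < l0 + \<delta> \<longrightarrow> \<not> (\<exists>u\<in>ball w r. chain_recurrent I (\<lambda>v. f v l) u))"
    using CEP unfolding chain_explosion_point_def by blast
  obtain q m where qm: "q \<in> I" "0 < m" "dist q w < r" "(g ^^ m) q = w" "(g ^^ m) w = x0"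
    "(q - w) * (x0 - w) > 0"
    using core[OF intI gI gc H2' x0(1) wI wx gL x0(2) wU' r\<delta>(1)] by blast
  define P where "P = (\<lambda>l. (((\<lambda>x. f x l) ^^ m) q - q) * (((\<lambda>x. f x l) ^^ m) w - w))"
  have Pc: "continuous_on J P" unfolding P_def
    by (intro continuous_intros iter_cont_param[OF cj maps] qm(1) wI)
  have P0: "P l0 < 0"
  proof -
    have "P l0 = (w - q) * (x0 - w)" using qm unfolding P_def g_def by simp
    also have "\<dots> = - ((q - w) * (x0 - w))" by algebra
    finally show ?thesis using qm(6) by linarith
  qed
  have "continuous (at l0 within J) P" using Pc l0J' continuous_on_eq_continuous_within by blast
  then obtain \<eta> where \<eta>: "\<eta> > 0" "\<forall>l\<in>J. dist l l0 < \<eta> \<longrightarrow> dist (P l) (P l0) < - P l0"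
  proof -
    have "- P l0 > 0" using P0 by simp
    with \<open>continuous (at l0 within J) P\<close> show ?thesis unfolding continuous_within_eps_delta
      using that by blast
  qed
  have key: "\<exists>u\<in>ball w r. chain_recurrent I (\<lambda>v. f v l) u" if l: "l \<in> J" "dist l l0 < \<eta>" for l
  proof -
    define h where "h = (\<lambda>x. f x l)"
    have hI: "\<forall>x\<in>I. h x \<in> I" using maps l unfolding h_def by auto
    have hc: "continuous_on I h"
    proof -
      have "continuous_on I (\<lambda>x. (x, l))" by (intro continuous_on_Pair continuous_on_id continuous_on_const)
      moreover have "(\<lambda>x. (x, l)) ` I \<subseteq> I \<times> J" using l by auto
      ultimately have "continuous_on I (\<lambda>x. f (fst (x, l)) (snd (x, l)))" by (rule continuous_on_compose2[OF cj])
    then show ?thesis unfolding h_def by simp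
    qed
    have "dist (P l) (P l0) < - P l0" using \<eta>(2) l by blast
    then have Pl: "P l < 0" unfolding dist_real_def by linarith
    define \<phi> where "\<phi> = (\<lambda>x. (h ^^ m) x - x)"
    have "\<phi> q * \<phi> w = P l" unfolding P_def \<phi>_def h_def by (rule refl)
    then have \<phi>P: "\<phi> q * \<phi> w < 0" using Pl by simp
    define a where "a = min q w"
    define b where "b = max q w"
    have ab: "a \<le> b" unfolding a_def b_def by simp
    have abI: "{a..b} \<subseteq> I"
    proof
      fix x assume x: "x \<in> {a..b}"
      have "a \<in> I" "b \<in> I" using qm(1) wI unfolding a_def b_def by (auto simp: min_def max_def)
      moreover have "a \<le> x" "x \<le> b" using x by auto
      ultimately show "x \<in> I" using intI unfolding is_interval_1 by blast
    qed
    have \<phi>c: "continuous_on {a..b} \<phi>" unfolding \<phi>_def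
      by (intro continuous_intros continuous_on_subset[OF iter_cont_space[OF hc hI] abI])
    have \<phi>ab: "\<phi> a * \<phi> b < 0"
    proof (cases "q \<le> w")
      case True
      then have "a = q" "b = w" unfolding a_def b_def by auto
      then show ?thesis using \<phi>P by simp
    next
      case False
      then have "a = w" "b = q" unfolding a_def b_def by auto
      then show ?thesis using \<phi>P by (simp add: mult.commute)
    qed
    obtain u where u: "a \<le> u" "u \<le> b" "\<phi> u = 0"
    proof (cases "\<phi> a \<le> 0")
      case True
      then have "0 \<le> \<phi> b" using \<phi>ab by (metis mult_nonpos_nonpos not_le order_less_asym)
      then show ?thesis using IVT'[of \<phi> a 0 b] True ab \<phi>c that by blast
    next
      case False
      then have "\<phi> b \<le> 0" using \<phi>ab by (metis mult_pos_pos not_le order_less_asym)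
      then show ?thesis using IVT2'[of \<phi> b 0 a] False ab \<phi>c that by fastforce
    qed
    have uI: "u \<in> I" using u abI by auto
    have "dist u w \<le> dist q w"
    proof (cases "q \<le> w")
      case True
      then have "a = q" "b = w" unfolding a_def b_def by auto
      then show ?thesis using u True by (simp add: dist_real_def)
    next
      case False
      then have "a = w" "b = q" unfolding a_def b_def by auto
      then show ?thesis using u False by (simp add: dist_real_def)
    qed
    then have "u \<in> ball w r" using qm(3) by (simp add: dist_commute)
    moreover have "chain_recurrent I h u"
      using periodic_cr[OF hI uI _ qm(2)] u(3) unfolding \<phi>_def by simp
    ultimately show ?thesis unfolding h_def by blast
  qed
  obtain eJ where eJ: "eJ > 0" "ball l0 eJ \<subseteq> J" using l0J mem_interior by blast
  define t where "t = min \<eta> (min \<delta> eJ) / 2"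
  have t: "t > 0" "t < \<eta>" "t < \<delta>" "t < eJ" using \<eta> r\<delta> eJ unfolding t_def by auto
  have l1: "l0 - t \<in> J" "dist (l0 - t) l0 < \<eta>" using t eJ by (auto simp: dist_real_def)
  have l2: "l0 + t \<in> J" "dist (l0 + t) l0 < \<eta>" using t eJ by (auto simp: dist_real_def)
  have "l0 - \<delta> < l0 - t" "l0 - t < l0" "l0 < l0 + t" "l0 + t < l0 + \<delta>" using t by auto
  then show False using r\<delta>(3) key[OF l1] key[OF l2] l1(1) l2(1) by blast
qed

end
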